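(* Let $\gamma$ be a generator of the multiplicative group $\mathbb{F}_{q^m}^*$. Let $d\le q-1$ and let $\ell_1,\dots,\ell_d\in\{0,1,\dots,q-2\}$ be distinct. Then the $d\times d$ matrix $M$ over $\mathbb{F}_{q^m}$ whose $(i,j)$ entry, for $i=0,1,\dots,d-1$ and $j=1,\dots,d$, is $\gamma^{\ell_j(1+q+\cdots+q^{i-1})}$ (so the row $i=0$ is all ones, row $i=1$ is $(\gamma^{\ell_1},\dots,\gamma^{\ell_d})$, row $i=2$ is $(\gamma^{\ell_1(1+q)},\dots,\gamma^{\ell_d(1+q)})$, etc.) is full rank. *)

theory Defs
  imports "Jordan_Normal_Form.DL_Rank" "HOL-Computational_Algebra.Primes"
begin

end

theory Submission
  imports Defs "HOL-Number_Theory.Residues"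
begin

definition ss :: "nat \<Rightarrow> nat \<Rightarrow> nat" where "ss q i = (\<Sum>k<i. q ^ k)"

lemma ss_Suc: "ss q (Suc i) = 1 + q * ss q i"
  unfolding ss_def by (subst sum.lessThan_Suc_shift) (simp add: sum_distrib_left)

lemma ss_0: "ss q 0 = 0" unfolding ss_def by simp

lemma two_pows:
  fixes \<gamma> a b :: "'a :: field"
  assumes notpow: "\<And>t (y::'a). 0 < t \<Longrightarrow> t < q - 1 \<Longrightarrow> \<gamma> ^ t \<noteq> y ^ (q - 1)"
    and g: "\<gamma> \<noteq> 0" and a: "a \<noteq> 0" and b: "b \<noteq> 0"
    and uv: "u \<noteq> v" "u \<le> q - 2" "v \<le> q - 2"
    and eq: "\<gamma> ^ u * b ^ (q - 1) = \<gamma> ^ v * a ^ (q - 1)"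
  shows False
proof (cases "u < v")
  case True
  have "\<gamma> ^ v = \<gamma> ^ u * \<gamma> ^ (v - u)" using True by (simp flip: power_add)
  with eq have "\<gamma> ^ u * b ^ (q - 1) = \<gamma> ^ u * (\<gamma> ^ (v - u) * a ^ (q - 1))" by simp
  hence "b ^ (q - 1) = \<gamma> ^ (v - u) * a ^ (q - 1)" using g by simp
  hence "\<gamma> ^ (v - u) = (b / a) ^ (q - 1)" using a by (simp add: power_divide field_simps)
  moreover have "0 < v - u" "v - u < q - 1" using True uv by auto
  ultimately show False using notpow by blast
next
  case False
  hence F: "v < u" using uv by simp
  have "\<gamma> ^ u = \<gamma> ^ v * \<gamma> ^ (u - v)" using F by (simp flip: power_add)
  with eq have "\<gamma> ^ v * (\<gamma> ^ (u - v) * b ^ (q - 1)) = \<gamma> ^ v * a ^ (q - 1)" by (simp add: mult_ac)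
  hence "a ^ (q - 1) = \<gamma> ^ (u - v) * b ^ (q - 1)" using g by simp
  hence "\<gamma> ^ (u - v) = (a / b) ^ (q - 1)" using b by (simp add: power_divide field_simps)
  moreover have "0 < u - v" "u - v < q - 1" using F uv by auto
  ultimately show False using notpow by blast
qed

lemma core:
  fixes \<gamma> :: "'a :: field" and q :: nat and l :: "nat \<Rightarrow> nat"
  assumes frob: "\<And>(f::nat\<Rightarrow>'a) A. (sum f A) ^ q = sum (\<lambda>i. f i ^ q) A"
    and surj: "\<And>y::'a. \<exists>x. x ^ q = y"
    and qpos: "q > 0"
    and notpow: "\<And>t (y::'a). 0 < t \<Longrightarrow> t < q - 1 \<Longrightarrow> \<gamma> ^ t \<noteq> y ^ (q - 1)"
    and g: "3 \<le> q \<Longrightarrow> \<gamma> \<noteq> 0"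
  shows "finite J \<Longrightarrow> inj_on l J \<Longrightarrow> (\<forall>j\<in>J. l j \<le> q - 2) \<Longrightarrow>
     (\<forall>i<card J. (\<Sum>j\<in>J. c j * (\<gamma> ^ l j) ^ ss q i) = 0) \<Longrightarrow> \<forall>j\<in>J. c j = 0"
proof (induction "card J" arbitrary: J c rule: less_induct)
  case less
  show ?case
  proof (rule ccontr)
    assume "\<not> (\<forall>j\<in>J. c j = 0)"
    then obtain j0 where j0: "j0 \<in> J" "c j0 \<noteq> 0" by auto
    have cpos: "0 < card J" using j0 less.prems(1) card_gt_0_iff by blast
    have row0: "(\<Sum>j\<in>J. c j) = 0" using spec[OF less.prems(4), of 0] cpos by (simp add: ss_0)
    have "\<exists>j1\<in>J. j1 \<noteq> j0 \<and> c j1 \<noteq> 0"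
    proof (rule ccontr)
      assume "\<not> ?thesis"
      hence "(\<Sum>j\<in>J. c j) = c j0"
        using sum.remove[OF less.prems(1) j0(1), of c] by (auto intro!: sum.neutral)
      thus False using row0 j0 by simp
    qed
    then obtain j1 where j1: "j1 \<in> J" "j1 \<noteq> j0" "c j1 \<noteq> 0" by auto
    have ldiff: "l j0 \<noteq> l j1" using less.prems(2) j0 j1 by (metis inj_on_def)
    have lle: "l j0 \<le> q - 2" "l j1 \<le> q - 2" using less.prems(3) j0 j1 by auto
    hence q3: "3 \<le> q" using ldiff by auto
    have gnz: "\<gamma> \<noteq> 0" using g q3 by simp
    define x where "x j = \<gamma> ^ l j" for j
    have xnz: "x j \<noteq> 0" for j using gnz by (simp add: x_def)
    define c' where "c' j = (SOME z. z ^ q = c j * x j)" for j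
    have c': "c' j ^ q = c j * x j" for j unfolding c'_def using surj by (rule someI_ex)
    have rows': "(\<Sum>j\<in>J. c' j * x j ^ ss q i) = 0" if i: "i < card J - 1" for i
    proof -
      have "(\<Sum>j\<in>J. c' j * x j ^ ss q i) ^ q = (\<Sum>j\<in>J. (c' j * x j ^ ss q i) ^ q)"
        by (rule frob)
      also have "\<dots> = (\<Sum>j\<in>J. c j * x j ^ ss q (Suc i))"
        by (intro sum.cong refl) (simp add: power_mult_distrib c' ss_Suc power_add mult.commute[of "ss q i" q]
              flip: power_mult)
      also have "\<dots> = 0" using less.prems(4) i unfolding x_def by simp
      finally show ?thesis using qpos by simp
    qed
    define lam where "lam = c' j0 / c j0"
    define e where "e j = c' j - lam * c j" for j
    have e0: "e j0 = 0" unfolding e_def lam_def using j0 by simp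
    have Jfin: "finite (J - {j0})" using less.prems(1) by simp
    have cardJ: "card (J - {j0}) = card J - 1" using less.prems(1) j0 by simp
    have "\<forall>j\<in>J - {j0}. e j = 0"
    proof (rule less.hyps[of "J - {j0}" e])
      show "card (J - {j0}) < card J" using cardJ cpos by simp
      show "finite (J - {j0})" by (fact Jfin)
      show "inj_on l (J - {j0})" using less.prems(2) by (rule inj_on_subset) auto
      show "\<forall>j\<in>J - {j0}. l j \<le> q - 2" using less.prems(3) by auto
      show "\<forall>i<card (J - {j0}). (\<Sum>j\<in>J - {j0}. e j * (\<gamma> ^ l j) ^ ss q i) = 0"
      proof (intro allI impI)
        fix i assume i: "i < card (J - {j0})"
        have "(\<Sum>j\<in>J. e j * x j ^ ss q i) =
              (\<Sum>j\<in>J. c' j * x j ^ ss q i) - lam * (\<Sum>j\<in>J. c j * x j ^ ss q i)"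
          by (simp add: e_def algebra_simps sum_subtractf sum_distrib_left)
        also have "\<dots> = 0" using rows'[of i] less.prems(4) i cardJ unfolding x_def by simp
        finally have "(\<Sum>j\<in>J. e j * x j ^ ss q i) = 0" .
        moreover have "(\<Sum>j\<in>J. e j * x j ^ ss q i) = e j0 * x j0 ^ ss q i + (\<Sum>j\<in>J - {j0}. e j * x j ^ ss q i)"
          by (rule sum.remove[OF less.prems(1) j0(1)])
        ultimately show "(\<Sum>j\<in>J - {j0}. e j * (\<gamma> ^ l j) ^ ss q i) = 0"
          using e0 unfolding x_def by simp
      qed
    qed
    hence "c' j = lam * c j" if "j \<in> J" for j using that e0 unfolding e_def
      by (cases "j = j0") auto
    hence key: "c j * x j = lam ^ q * c j ^ q" if "j \<in> J" for j
      using c'[of j] that by (simp add: power_mult_distrib)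
    have xe: "x j = lam ^ q * c j ^ (q - 1)" if "j \<in> J" "c j \<noteq> 0" for j
    proof -
      have "c j ^ q = c j * c j ^ (q - 1)" proof -
        have "c j ^ q = c j ^ Suc (q - 1)" using qpos by simp
        thus ?thesis by (simp only: power_Suc)
      qed
      hence "c j * x j = c j * (lam ^ q * c j ^ (q - 1))" using key[OF that(1)] by (simp add: mult_ac)
      thus ?thesis using that(2) by simp
    qed
    have "\<gamma> ^ l j0 * c j1 ^ (q - 1) = \<gamma> ^ l j1 * c j0 ^ (q - 1)"
      using xe[OF j0] xe[OF j1(1) j1(3)] unfolding x_def by (simp add: mult_ac)
    thus False using two_pows[OF notpow gnz j0(2) j1(3) ldiff lle] by blast
  qed
qed


lemma dvd_pow_minus1: "q \<ge> 1 \<Longrightarrow> (q - 1) dvd q ^ m - (1::nat)"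
proof (induction m)
  case (Suc m)
  have qm: "q ^ m \<ge> 1" using Suc.prems by simp
  have "q ^ Suc m - 1 = q * (q ^ m - 1) + (q - 1)"
    using qm Suc.prems by (simp add: algebra_simps diff_mult_distrib2)
  moreover have "(q - 1) dvd q * (q ^ m - 1) + (q - 1)"
    using Suc.IH Suc.prems by (intro dvd_add dvd_mult) auto
  ultimately show ?case by metis
qed simp

lemma pow_card_minus1:
  fixes x :: "'a :: {field, finite}"
  assumes "x \<noteq> 0"
  shows "x ^ (card (UNIV :: 'a set) - 1) = 1"
proof -
  have "x * (\<Prod>y\<in>UNIV-{0}. x * y) = x * x ^ (card (UNIV :: 'a set) - 1) * \<Prod>(UNIV-{0})"
    by (simp add: prod.distrib mult_ac)
  also have "(\<Prod>y\<in>UNIV-{0}. x * y) = (\<Prod>y\<in>UNIV-{0}. y)"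
    by (rule prod.reindex_bij_witness[of _ "\<lambda>y. y / x" "\<lambda>y. x * y"]) (use assms in auto)
  finally have "x * x ^ (card (UNIV :: 'a set) - 1) * \<Prod>(UNIV-{0}) = x * \<Prod>(UNIV-{0::'a})" by simp
  moreover have "\<Prod>(UNIV-{0::'a}) \<noteq> 0" by (simp add: prod_zero_iff)
  ultimately show ?thesis using assms by simp
qed

lemma gen_mod:
  fixes \<gamma> :: "'a :: {field, finite}"
  assumes g: "\<gamma> \<noteq> 0" and gen: "\<forall>x :: 'a. x \<noteq> 0 \<longrightarrow> (\<exists>k :: nat. x = \<gamma> ^ k)"
    and N: "N = card (UNIV :: 'a set) - 1"
    and eq: "\<gamma> ^ a = \<gamma> ^ b"
  shows "a mod N = b mod N"
proof -
  have c2: "card (UNIV :: 'a set) \<ge> 2"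
  proof -
    have "{0, 1::'a} \<subseteq> UNIV" by simp
    hence "card {0, 1::'a} \<le> card (UNIV :: 'a set)" by (intro card_mono) auto
    thus ?thesis by simp
  qed
  hence Npos: "N > 0" using N by simp
  have gN: "\<gamma> ^ N = 1" using pow_card_minus1[OF g] N by simp
  have red: "\<gamma> ^ k = \<gamma> ^ (k mod N)" for k
  proof -
    have "\<gamma> ^ k = \<gamma> ^ (N * (k div N) + k mod N)" by (metis div_mult_mod_eq mult.commute)
    also have "\<dots> = \<gamma> ^ (k mod N)" by (simp only: power_add power_mult gN power_one mult_1)
    finally show ?thesis .
  qed
  have img: "(\<lambda>k. \<gamma> ^ k) ` {..<N} = UNIV - {0}"
  proof
    show "(\<lambda>k. \<gamma> ^ k) ` {..<N} \<subseteq> UNIV - {0}" using g by auto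
    show "UNIV - {0} \<subseteq> (\<lambda>k. \<gamma> ^ k) ` {..<N}"
    proof
      fix x assume "x \<in> (UNIV :: 'a set) - {0}"
      then obtain k where "x = \<gamma> ^ k" using gen by auto
      hence "x = \<gamma> ^ (k mod N)" using red by simp
      moreover have "k mod N \<in> {..<N}" using Npos by simp
      ultimately show "x \<in> (\<lambda>k. \<gamma> ^ k) ` {..<N}" by blast
    qed
  qed
  have "card (UNIV - {0::'a}) = N" using N by (simp add: card_Diff_singleton)
  hence "inj_on (\<lambda>k. \<gamma> ^ k) {..<N}" using img by (intro eq_card_imp_inj_on) auto
  moreover have "\<gamma> ^ (a mod N) = \<gamma> ^ (b mod N)" using eq red by metis
  ultimately show ?thesis using Npos by (auto simp: inj_on_def)
qed

theorem corollary2p16: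
  fixes q m d :: nat and \<gamma> :: "'a :: {field, finite}" and l :: "nat \<Rightarrow> nat"
  assumes "\<exists>p k. prime p \<and> k > 0 \<and> q = p ^ k"
    and "m \<ge> 1"
    and "card (UNIV :: 'a set) = q ^ m"
    and "\<forall>x :: 'a. x \<noteq> 0 \<longrightarrow> (\<exists>k :: nat. x = \<gamma> ^ k)"
    and "d \<le> q - 1"
    and "\<forall>j \<in> {1..d}. l j \<le> q - 2"
    and "inj_on l {1..d}"
  shows "vec_space.rank d
           (mat d d (\<lambda>(i, j). \<gamma> ^ (l (j + 1) * (\<Sum>k<i. q ^ k)))) = d"
proof -
  obtain p k where pk: "prime p" "k > 0" "q = p ^ k" using assms(1) by blast
  have q2: "q \<ge> 2" proof -
    have "2 \<le> p" using prime_ge_2_nat[OF pk(1)] .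
    moreover have "p \<le> p ^ k" using pk(2) \<open>2 \<le> p\<close> by (simp add: self_le_power)
    ultimately show ?thesis using pk(3) by simp
  qed
  have cpos: "CHAR('a) > 0" by (rule finite_imp_CHAR_pos) simp
  have cprime: "prime CHAR('a)" using cpos by (rule prime_CHAR_semidom)
  have "CHAR('a) dvd p ^ (k * m)" using CHAR_dvd_CARD[where 'a='a] assms(3) pk by (simp add: power_mult)
  hence "CHAR('a) dvd p" using cprime prime_dvd_power by blast
  hence cp: "CHAR('a) = p" using cprime pk(1) by (simp add: primes_dvd_imp_eq)
  have qc: "q = CHAR('a) ^ k" using pk cp by simp
  have frob: "\<And>(f::nat\<Rightarrow>'a) A. (sum f A) ^ q = sum (\<lambda>i. f i ^ q) A"
    by (rule freshmans_dream_sum'[OF cprime qc])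
  have injq: "inj (\<lambda>x::'a. x ^ q)"
  proof (rule injI)
    fix x y :: 'a assume h: "x ^ q = y ^ q"
    have "((x - y) + y) ^ q = (x - y) ^ q + y ^ q" by (rule freshmans_dream'[OF cprime qc])
    hence "(x - y) ^ q = 0" using h by simp
    thus "x = y" by simp
  qed
  have surj: "\<And>y::'a. \<exists>x. x ^ q = y"
    using finite_UNIV_inj_surj[OF _ injq] by (metis finite_class.finite_UNIV surjD)
  have g: "3 \<le> q \<Longrightarrow> \<gamma> \<noteq> 0"
  proof
    assume q3: "3 \<le> q" and g0: "\<gamma> = 0"
    have "\<forall>x::'a. x \<noteq> 0 \<longrightarrow> x = 1"
      using assms(4) g0 by (metis power_0 zero_power neq0_conv)
    hence "(UNIV :: 'a set) \<subseteq> {0, 1}" by auto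
    hence "card (UNIV :: 'a set) \<le> 2" by (metis card_2_iff card_mono finite.emptyI finite.insertI zero_neq_one)
    moreover have "q ^ m \<ge> q" using assms(2) q2 by (simp add: self_le_power)
    ultimately show False using q3 assms(3) by simp
  qed
  have notpow: "\<And>t (y::'a). 0 < t \<Longrightarrow> t < q - 1 \<Longrightarrow> \<gamma> ^ t \<noteq> y ^ (q - 1)"
  proof
    fix t and y :: 'a assume t: "0 < t" "t < q - 1" and e: "\<gamma> ^ t = y ^ (q - 1)"
    have gn: "\<gamma> \<noteq> 0" using g t by simp
    have "y \<noteq> 0"
    proof
      assume "y = 0"
      hence "\<gamma> ^ t = 0" using e t by (simp add: zero_power)
      thus False using gn by simp
    qed
    then obtain u where u: "y = \<gamma> ^ u" using assms(4) by blast
    define N where "N = card (UNIV :: 'a set) - 1"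
    have "t mod N = (u * (q - 1)) mod N"
      using gen_mod[OF gn assms(4) N_def] e u by (simp add: power_mult)
    moreover have "(q - 1) dvd N" using N_def assms(3) dvd_pow_minus1 q2 by simp
    ultimately have "t mod (q - 1) = (u * (q - 1)) mod (q - 1)" by (metis mod_mod_cancel)
    thus False using t by simp
  qed
  define A where "A = mat d d (\<lambda>(i, j). \<gamma> ^ (l (j + 1) * (\<Sum>k<i. q ^ k)))"
  have A: "A \<in> carrier_mat d d" unfolding A_def by simp
  have "det A \<noteq> 0"
  proof
    assume "det A = 0"
    then obtain v where v: "v \<in> carrier_vec d" "v \<noteq> 0\<^sub>v d" "A *\<^sub>v v = 0\<^sub>v d"
      using det_0_iff_vec_prod_zero_field[OF A] by blast
    have "\<forall>j\<in>{..<d}. v $ j = 0"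
    proof (rule core[OF frob surj _ notpow g, of "{..<d}" "\<lambda>j. l (j + 1)" "\<lambda>j. v $ j"])
      show "0 < q" using q2 by simp
      show "finite {..<d}" by simp
      show "inj_on (\<lambda>j. l (j + 1)) {..<d}" proof (rule inj_onI)
        fix a b assume ab: "a \<in> {..<d}" "b \<in> {..<d}" "l (a + 1) = l (b + 1)"
        have "a + 1 \<in> {1..d}" "b + 1 \<in> {1..d}" using ab by auto
        hence "a + 1 = b + 1" using inj_onD[OF assms(7) ab(3)] by blast
        thus "a = b" by simp
      qed
      show "\<forall>j\<in>{..<d}. l (j + 1) \<le> q - 2" using assms(6) by auto
      show "\<forall>i<card {..<d}. (\<Sum>j\<in>{..<d}. v $ j * (\<gamma> ^ l (j + 1)) ^ ss q i) = 0"
      proof (intro allI impI)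
        fix i assume i: "i < card {..<d}"
        have "(A *\<^sub>v v) $ i = 0" using v(3) i by simp
        moreover have "(A *\<^sub>v v) $ i = (\<Sum>j\<in>{..<d}. v $ j * (\<gamma> ^ l (j + 1)) ^ ss q i)"
          using i v(1) unfolding A_def
          by (auto simp: mult_mat_vec_def scalar_prod_def ss_def power_mult mult.commute
              intro!: sum.cong)
        ultimately show "(\<Sum>j\<in>{..<d}. v $ j * (\<gamma> ^ l (j + 1)) ^ ss q i) = 0" by simp
      qed
    qed
    hence "v = 0\<^sub>v d" using v(1) by (intro eq_vecI) auto
    thus False using v(2) by simp
  qed
  thus ?thesis using vec_space.det_rank_iff[OF A] unfolding A_def by simp
qed

end
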